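(* Let $\Omega$ be the solution of $\Omega e^\Omega=1$, let $c=\frac{1}{1+e^\Omega}$, and define $g:[0,1]\to[0,1]$ by $g(y)=\frac{c}{1-y}$ for $y<\frac{1-2c}{1-c}$, $g(y)=1-c$ for $\frac{1-2c}{1-c}\le y<1$, and $g(1)=1$. For $\tau,\gamma,\theta\in[0,1]$ let $$F(\tau,\gamma,\theta)=\int_0^\tau g(y)\,dy+\int_0^\gamma g(y)\,dy+(1-\tau)\big(1-\gamma-(1-\theta)g(\theta)\big)+\gamma\int_\tau^1\min\{g(y),1-g(\theta)\}\,dy.$$ Then $F(\tau,\gamma,\theta)\ge\Omega$ for all $\tau\in[0,1]$ and all $0\le\gamma\le\theta\le1$. *)

theory Defs
  imports "HOL-Analysis.Analysis"
begin

definition Omega :: real where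
  "Omega = (THE x. x * exp x = 1)"

definition cc :: real where
  "cc = 1 / (1 + exp Omega)"

definition g :: "real \<Rightarrow> real" where
  "g y = (if y < (1 - 2 * cc) / (1 - cc) then cc / (1 - y)
          else if y < 1 then 1 - cc else 1)"

definition F :: "real \<Rightarrow> real \<Rightarrow> real \<Rightarrow> real" where
  "F \<tau> \<gamma> \<theta> =
     integral {0..\<tau>} g + integral {0..\<gamma>} g
     + (1 - \<tau>) * (1 - \<gamma> - (1 - \<theta>) * g \<theta>)
     + \<gamma> * integral {\<tau>..1} (\<lambda>y. min (g y) (1 - g \<theta>))"

end

theory Submission
  imports Defs
begin

lemma Omega_props: "Omega * exp Omega = 1" "0 < Omega" "Omega < 1"
proof -
  have ex: "\<exists>x::real. x * exp x = 1"
  proof -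
    have c: "continuous_on {0..1::real} (\<lambda>x. x * exp x)"
      by (intro continuous_intros)
    have a: "(\<lambda>x. x * exp x) (0::real) \<le> 1" by simp
    have b: "1 \<le> (\<lambda>x. x * exp x) (1::real)" by simp
    have "\<exists>x::real. 0 \<le> x \<and> x \<le> 1 \<and> x * exp x = 1"
      using IVT'[OF a b _ c] by simp
    then show ?thesis by blast
  qed
  have pos: "x > 0" if "x * exp x = 1" for x :: real
  proof (rule ccontr)
    assume "\<not> x > 0"
    then have "x * exp x \<le> 0" by (simp add: mult_nonpos_nonneg)
    with that show False by simp
  qed
  have uniq: "x = y" if "x * exp x = 1" "y * exp y = 1" for x y :: real
  proof (rule ccontr)
    assume ne: "x \<noteq> y"
    have px: "x > 0" and py: "y > 0" using pos that by auto
    have mono: "u * exp u < v * exp v" if "0 < u" "u < v" for u v :: real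
      using that by (intro mult_strict_mono) auto
    show False
    proof (cases "x < y")
      case True
      then show False using mono[OF px True] that by simp
    next
      case False
      then have "y < x" using ne by simp
      then show False using mono[OF py, of x] that by simp
    qed
  qed
  have th: "Omega * exp Omega = 1"
  proof -
    have "\<exists>!x::real. x * exp x = 1" using ex uniq by blast
    then show ?thesis unfolding Omega_def by (rule theI')
  qed
  show "Omega * exp Omega = 1" by (fact th)
  show "0 < Omega" using pos th by blast
  show "Omega < 1"
  proof (rule ccontr)
    assume "\<not> Omega < 1"
    then have "Omega * exp Omega \<ge> 1 * exp 1"
      by (intro mult_mono) auto
    moreover have "exp (1::real) > 1" by simp
    ultimately show False using th by simp
  qed
qed

lemma ln_Omega: "ln Omega = - Omega"
proof -
  have "exp Omega = 1 / Omega" using Omega_props by (simp add: field_simps)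
  then have "Omega = exp (- Omega)" using Omega_props by (simp add: exp_minus field_simps)
  then show ?thesis by (metis ln_exp)
qed

lemma cc_eq: "cc = Omega / (1 + Omega)"
proof -
  have "exp Omega = 1 / Omega" using Omega_props by (simp add: field_simps)
  then have "cc = 1 / (1 + 1 / Omega)" unfolding cc_def by simp
  also have "\<dots> = Omega / (1 + Omega)" using Omega_props by (simp add: field_simps)
  finally show ?thesis .
qed

lemma thr_eq: "(1 - 2 * cc) / (1 - cc) = 1 - Omega"
proof -
  have "1 + Omega > 0" using Omega_props by simp
  then show ?thesis unfolding cc_eq by (simp add: field_simps)
qed

lemma g_eq: "g y = (if y < 1 - Omega then cc / (1 - y) else if y < 1 then 1 - cc else 1)"
  unfolding g_def thr_eq by simp

lemma cc_facts: "0 < cc" "cc < 1/2" "cc / Omega = 1 - cc" "cc * (1 + Omega) = Omega"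
proof -
  have "1 + Omega > 0" "Omega + Omega * Omega > 0" using Omega_props by (auto intro: add_pos_pos)
  then show "0 < cc" "cc < 1/2" "cc / Omega = 1 - cc" "cc * (1 + Omega) = Omega"
    using Omega_props unfolding cc_eq by (auto simp: field_simps)
qed

lemma g_ge_cc: "y \<ge> 0 \<Longrightarrow> g y \<ge> cc"
  using cc_facts Omega_props unfolding g_eq
  by (auto simp: field_simps)

lemma g_pos: "g y \<ge> 0"
  using cc_facts Omega_props unfolding g_eq
  by (auto simp: field_simps)

lemma g_le: "y < 1 \<Longrightarrow> g y \<le> 1 - cc"
proof -
  assume y: "y < 1"
  show ?thesis
  proof (cases "y < 1 - Omega")
    case True
    then have "1 - y > Omega" by simp
    then have "cc / (1 - y) \<le> cc / Omega" using cc_facts Omega_props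
      by (intro divide_left_mono) auto
    then show ?thesis using True cc_facts unfolding g_eq by simp
  qed (use y in \<open>auto simp: g_eq\<close>)
qed

lemma h_le: "(1 - \<theta>) * g \<theta> \<le> cc" if "\<theta> \<le> 1" for \<theta>
proof (cases "\<theta> < 1 - Omega")
  case True
  then show ?thesis using Omega_props unfolding g_eq by simp
next
  case False
  show ?thesis
  proof (cases "\<theta> < 1")
    case True
    have "(1 - \<theta>) * (1 - cc) \<le> Omega * (1 - cc)"
      using False cc_facts by (intro mult_right_mono) auto
    also have "\<dots> = cc" using cc_facts Omega_props by (simp add: field_simps)
    finally show ?thesis using True False unfolding g_eq by simp
  next
    case False
    then show ?thesis using that cc_facts by simp
  qed
qed

definition Gc :: "real \<Rightarrow> real" where
  "Gc t = (if t \<le> 1 - Omega then - cc * ln (1 - t) else cc * Omega + (1 - cc) * (t - (1 - Omega)))"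

lemma G_int1: "(g has_integral Gc t) {0..t}" if "0 \<le> t" "t \<le> 1 - Omega" for t
proof -
  have "((\<lambda>y. cc / (1 - y)) has_integral ((- cc * ln (1 - t)) - (- cc * ln (1 - 0)))) {0..t}"
  proof (rule fundamental_theorem_of_calculus)
    show "0 \<le> t" by fact
    fix x assume x: "x \<in> {0..t}"
    then have "x < 1" using that Omega_props by auto
    then show "((\<lambda>y. - cc * ln (1 - y)) has_vector_derivative cc / (1 - x)) (at x within {0..t})"
      unfolding has_real_derivative_iff_has_vector_derivative[symmetric]
      by (auto intro!: derivative_eq_intros simp: field_simps)
  qed
  then have "((\<lambda>y. cc / (1 - y)) has_integral Gc t) {0..t}"
    using that unfolding Gc_def by simp
  then show ?thesis
  proof (rule has_integral_spike_finite[where S="{}", rotated 2])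
    fix x assume "x \<in> {0..t} - {}"
    then have x: "x \<le> 1 - Omega" "x \<ge> 0" using that by auto
    show "g x = cc / (1 - x)"
    proof (cases "x < 1 - Omega")
      case False
      then have "x = 1 - Omega" using x by simp
      then show ?thesis using cc_facts Omega_props unfolding g_eq by simp
    qed (simp add: g_eq)
  qed simp
qed

lemma G_int: "(g has_integral Gc t) {0..t}" if "0 \<le> t" "t \<le> 1" for t
proof (cases "t \<le> 1 - Omega")
  case True
  then show ?thesis using G_int1 that by blast
next
  case False
  have a: "(g has_integral Gc (1 - Omega)) {0..1 - Omega}"
    using G_int1 Omega_props by simp
  have "((\<lambda>y. 1 - cc) has_integral (t - (1 - Omega)) * (1 - cc)) {1 - Omega..t}"
    using has_integral_const_real[of "1 - cc" "1 - Omega" t] False by simp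
  then have b: "(g has_integral (t - (1 - Omega)) * (1 - cc)) {1 - Omega..t}"
    by (rule has_integral_spike_finite[where S="{1}", rotated 2]) (use that in \<open>auto simp: g_eq\<close>)
  have "(g has_integral (Gc (1 - Omega) + (t - (1 - Omega)) * (1 - cc))) {0..t}"
    by (rule has_integral_combine[OF _ _ a b]) (use False Omega_props in auto)
  moreover have "Gc (1 - Omega) + (t - (1 - Omega)) * (1 - cc) = Gc t"
    using False Omega_props ln_Omega unfolding Gc_def by (simp add: algebra_simps)
  ultimately show ?thesis by simp
qed

lemma key_core: "- cc * ln u - cc * ln v + u * v * (1 - cc) \<ge> Omega"
  if "Omega \<le> u" "Omega \<le> v" for u v :: real
proof -
  have pu: "u > 0" "v > 0" using that Omega_props by auto
  define w where "w = u * v / Omega"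
  have wp: "w > 0" using pu Omega_props unfolding w_def by simp
  have "ln w \<le> w - 1" using ln_le_minus_one wp by simp
  moreover have "ln w = ln u + ln v + Omega"
    using pu Omega_props ln_Omega unfolding w_def by (simp add: ln_mult ln_div)
  ultimately have "ln u + ln v \<le> u * v / Omega - 1 - Omega" unfolding w_def by simp
  then have "- cc * ln u - cc * ln v \<ge> - cc * (u * v / Omega - 1 - Omega)"
    using cc_facts mult_left_mono[of "ln u + ln v" "u * v / Omega - 1 - Omega" cc]
    by (simp add: algebra_simps)
  moreover have "- cc * (u * v / Omega - 1 - Omega) + u * v * (1 - cc) = Omega"
  proof -
    have e1: "cc * (u * v / Omega) = u * v * (cc / Omega)" by simp
    show ?thesis using e1 cc_facts(3,4) by (simp add: algebra_simps)
  qed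
  ultimately show ?thesis by linarith
qed

lemma keyK: "Gc t + Gc x + (1 - t) * (1 - cc) * (1 - x) \<ge> Omega"
  if "0 \<le> t" "t \<le> 1" "0 \<le> x" "x \<le> 1" for t x
proof -
  define t' where "t' = min t (1 - Omega)"
  define x' where "x' = min x (1 - Omega)"
  have Gt: "Gc t = - cc * ln (1 - t') + (1 - cc) * (t - t')"
    using Omega_props ln_Omega unfolding Gc_def t'_def by (auto simp: algebra_simps min_def)
  have Gx: "Gc x = - cc * ln (1 - x') + (1 - cc) * (x - x')"
    using Omega_props ln_Omega unfolding Gc_def x'_def by (auto simp: algebra_simps min_def)
  have core: "- cc * ln (1 - t') - cc * ln (1 - x') + (1 - t') * (1 - x') * (1 - cc) \<ge> Omega"
    by (rule key_core) (use that Omega_props in \<open>auto simp: t'_def x'_def\<close>)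
  define p where "p = t - t'"
  define q where "q = x - x'"
  have pq: "p \<ge> 0" "q \<ge> 0" "t' \<ge> 0" "x' \<ge> 0"
    using that Omega_props unfolding p_def q_def t'_def x'_def by auto
  have "(1 - t) * (1 - x) = (1 - t') * (1 - x') - p * (1 - x') - q * (1 - t') + p * q"
    unfolding p_def q_def by (simp add: algebra_simps)
  then have eq: "(t - t') + (x - x') + (1 - t) * (1 - x) - (1 - t') * (1 - x') = p * x' + q * t' + p * q"
    unfolding p_def q_def by (simp add: algebra_simps)
  have "p * x' + q * t' + p * q \<ge> 0" using pq by simp
  then have "(1 - cc) * ((t - t') + (x - x') + (1 - t) * (1 - x) - (1 - t') * (1 - x')) \<ge> 0"
    using eq cc_facts by simp
  then show ?thesis using core Gt Gx by (simp add: algebra_simps)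
qed

theorem mainTheorem12:
  fixes \<tau> \<gamma> \<theta> :: real
  assumes "0 \<le> \<tau>" "\<tau> \<le> 1" "0 \<le> \<gamma>" "\<gamma> \<le> \<theta>" "\<theta> \<le> 1"
  shows "F \<tau> \<gamma> \<theta> \<ge> Omega"
proof -
  have i1: "integral {0..\<tau>} g = Gc \<tau>" using G_int assms by (meson integral_unique)
  have i2: "integral {0..\<gamma>} g = Gc \<gamma>" using G_int assms by (meson integral_unique order_trans)
  have K: "Gc \<tau> + Gc \<gamma> + (1 - \<tau>) * (1 - cc) * (1 - \<gamma>) \<ge> Omega"
    using keyK assms by auto
  show ?thesis
  proof (cases "\<theta> < 1")
    case True
    define k where "k = 1 - g \<theta>"
    have kc: "k \<ge> cc" using g_le[OF True] unfolding k_def by simp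
    have gi: "g integrable_on {\<tau>..1}"
      using G_int[of 1] integrable_subinterval_real[of g 0 1 \<tau> 1] assms
      by (auto simp: has_integral_integrable_integral)
    have ga: "g absolutely_integrable_on {\<tau>..1}"
      by (rule nonnegative_absolutely_integrable_1[OF gi]) (simp add: g_pos)
    have ci: "(\<lambda>y. k) integrable_on {\<tau>..1}"
      using has_integral_const_real by blast
    have ka: "(\<lambda>y. k) absolutely_integrable_on {\<tau>..1}"
      by (rule nonnegative_absolutely_integrable_1[OF ci]) (use kc cc_facts in simp)
    have mi: "(\<lambda>y. min (g y) k) integrable_on {\<tau>..1}"
      using absolutely_integrable_min_1[OF ga ka] set_lebesgue_integral_eq_integral(1) by blast
    have cci: "(\<lambda>y. cc) integrable_on {\<tau>..1}"
      using has_integral_const_real by blast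
    have "integral {\<tau>..1} (\<lambda>y. cc) \<le> integral {\<tau>..1} (\<lambda>y. min (g y) k)"
      by (rule integral_le[OF cci mi]) (use g_ge_cc kc assms in auto)
    then have I: "integral {\<tau>..1} (\<lambda>y. min (g y) k) \<ge> cc * (1 - \<tau>)"
      using assms by (simp add: mult.commute)
    have h: "(1 - \<theta>) * g \<theta> \<le> cc" using h_le assms by simp
    have "F \<tau> \<gamma> \<theta> \<ge> Gc \<tau> + Gc \<gamma> + (1 - \<tau>) * (1 - \<gamma> - cc) + \<gamma> * (cc * (1 - \<tau>))"
      unfolding F_def i1 i2 k_def[symmetric]
      using h I assms
      by (intro add_mono mult_left_mono order_refl) auto
    moreover have "(1 - \<tau>) * (1 - \<gamma> - cc) + \<gamma> * (cc * (1 - \<tau>)) = (1 - \<tau>) * (1 - cc) * (1 - \<gamma>)"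
      by (simp add: algebra_simps)
    ultimately show ?thesis using K by linarith
  next
    case False
    then have th: "\<theta> = 1" using assms by simp
    have "g 1 = 1" unfolding g_eq using Omega_props by simp
    then have z: "(\<lambda>y. min (g y) (1 - g \<theta>)) = (\<lambda>y. 0)" using th g_pos by (intro ext) (simp add: min_absorb2)
    have "F \<tau> \<gamma> \<theta> = Gc \<tau> + Gc \<gamma> + (1 - \<tau>) * (1 - \<gamma>)"
      unfolding F_def i1 i2 z using th by simp
    moreover have "(1 - \<tau>) * (1 - \<gamma>) \<ge> (1 - \<tau>) * (1 - cc) * (1 - \<gamma>)"
    proof -
      have "(1 - cc) * (1 - \<gamma>) \<le> 1 - \<gamma>" using assms cc_facts th
        by (intro mult_left_le_one_le) auto
      then show ?thesis using mult_left_mono[of "(1 - cc) * (1 - \<gamma>)" "1 - \<gamma>" "1 - \<tau>"] assms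
        by (simp add: mult.assoc)
    qed
    ultimately show ?thesis using K by linarith
  qed
qed

end
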